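(* Let $n,r\ge1$ be integers and $\mathbf G=\mathbf G(r,1,n)$ with the subgroup sequence, coset leaders and initial vector described in the context. Then the subgroup decoding algorithm decodes robustly: for all $g\in\mathbf G$, any received vector in the decoding region of $g$ decodes to $g$.
   Context: $\mathbf G(r,1,n)$ is the group of $n\times n$ complex monomial matrices whose nonzero entries are $r$-th roots of unity. Let $\xi=e^{2\pi i/r}$, let $a_i$ ($1\le i\le n$) be the diagonal matrix multiplying the $i$-th coordinate by $\xi$, and $b_j$ ($1\le j<n$) the permutation matrix swapping coordinates $j$ and $j+1$. Subgroups (block diagonal): $\mathbf G_0=\{I\}$, $\mathbf G_{2l-1}=\mathbf G(r,1,l)\oplus\{I_{n-l}\}$ ($1\le l\le n$), $\mathbf G_{2l}=\mathbf G(r,1,l)\oplus\mathbf G(r,1,1)\oplus\{I_{n-l-1}\}$ ($1\le l\le n-1$). Coset leaders: $\operatorname{CL}(\mathbf G_1/\mathbf G_0)=\{I,a_1,\dots,a_1^{r-1}\}$, $\operatorname{CL}(\mathbf G_{2l}/\mathbf G_{2l-1})=\{I,a_{l+1},\dots,a_{l+1}^{r-1}\}$, $\operatorname{CL}(\mathbf G_{2l+1}/\mathbf G_{2l})=\{I,b_l,b_{l-1}b_l,\dots,b_1b_2\cdots b_l\}$. Initial vector $\mathbf x_0=(u_1,\dots,u_n)$ with real $0<u_1<\cdots<u_n$, $\|\mathbf x_0\|=1$ (standard Hermitian inner product). $S=\operatorname{Stab}_{\mathbf G}(\mathbf x_0)$. Decoding region of $g$: $\operatorname{DR}(g)=\{\mathbf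 x:\|g\mathbf x-\mathbf x_0\|<\|a\mathbf x-\mathbf x_0\|\ \forall a\notin Sg\}$. Subgroup decoding algorithm: $\mathbf r_0=\mathbf r$; for $k=1,\dots,2n-1$ choose $d_k\in\operatorname{CL}(\mathbf G_k/\mathbf G_{k-1})$ minimizing $\|a\mathbf r_{k-1}-\mathbf x_0\|$ (ties broken by a fixed ordering), $\mathbf r_k=d_k\mathbf r_{k-1}$; output $d_{2n-1}\cdots d_1$, regarded as decoding to $g$ when it lies in $Sg$. *)

theory Defs
  imports "Jordan_Normal_Form.Matrix" "HOL-Combinatorics.Permutations"
begin

text \<open>Vectors of C^n are complex vec of dimension n (coordinates indexed 0..n-1,
  coordinate i+1 of the paper is index i); matrices are complex mat.\<close>

definition hnorm :: "complex vec \<Rightarrow> real" where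
  "hnorm v = sqrt (\<Sum>i<dim_vec v. (cmod (v $ i))\<^sup>2)"

definition xi :: "nat \<Rightarrow> complex" where
  "xi r = cis (2 * pi / real r)"

definition Grn :: "nat \<Rightarrow> nat \<Rightarrow> complex mat set" where
  "Grn r n = {A. A \<in> carrier_mat n n \<and>
     (\<exists>\<sigma> c. \<sigma> permutes {..<n} \<and> (\<forall>j<n. c j ^ r = 1) \<and>
        (\<forall>i<n. \<forall>j<n. A $$ (i,j) = (if i = \<sigma> j then c j else 0)))}"

definition amat :: "nat \<Rightarrow> nat \<Rightarrow> nat \<Rightarrow> complex mat" where
  "amat r n i = mat n n (\<lambda>(p,q). if p = q then (if p = i - 1 then xi r else 1) else 0)"

definition bmat :: "nat \<Rightarrow> nat \<Rightarrow> complex mat" where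
  "bmat n j = mat n n (\<lambda>(p,q).
      if q = (if p = j - 1 then j else if p = j then j - 1 else p) then 1 else 0)"

definition bprod :: "nat \<Rightarrow> nat \<Rightarrow> nat \<Rightarrow> complex mat" where
  "bprod n i l = foldr (\<lambda>j M. bmat n j * M) [i..<Suc l] (1\<^sub>m n)"

text \<open>Coset leaders CL(G_k / G_{k-1}) for k = 1 .. 2n-1.\<close>
definition CL :: "nat \<Rightarrow> nat \<Rightarrow> nat \<Rightarrow> complex mat set" where
  "CL r n k =
     (if k = 1 then {amat r n 1 ^\<^sub>m e | e. e < r}
      else if even k then {amat r n (k div 2 + 1) ^\<^sub>m e | e. e < r}
      else {1\<^sub>m n} \<union> {bprod n i (k div 2) | i. 1 \<le> i \<and> i \<le> k div 2})"

definition Stab :: "nat \<Rightarrow> nat \<Rightarrow> complex vec \<Rightarrow> complex mat set" where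
  "Stab r n x0 = {A \<in> Grn r n. A *\<^sub>v x0 = x0}"

definition DR :: "nat \<Rightarrow> nat \<Rightarrow> complex vec \<Rightarrow> complex mat \<Rightarrow> complex vec set" where
  "DR r n x0 g = {x \<in> carrier_vec n.
      \<forall>a \<in> Grn r n. a \<notin> {s * g | s. s \<in> Stab r n x0} \<longrightarrow>
         hnorm (g *\<^sub>v x - x0) < hnorm (a *\<^sub>v x - x0)}"

definition first_min :: "('a \<Rightarrow> real) \<Rightarrow> 'a list \<Rightarrow> 'a" where
  "first_min f xs = hd (filter (\<lambda>a. \<forall>b\<in>set xs. f a \<le> f b) xs)"

text \<open>Subgroup decoding: ord k is the fixed ordering of CL(G_k/G_{k-1}).
  dec_run returns (d_k ... d_1, r_k).\<close>
fun dec_run :: "nat \<Rightarrow> (nat \<Rightarrow> complex mat list) \<Rightarrow> complex vec \<Rightarrow> complex vec \<Rightarrow> nat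
                 \<Rightarrow> complex mat \<times> complex vec" where
  "dec_run n ord x0 rv 0 = (1\<^sub>m n, rv)"
| "dec_run n ord x0 rv (Suc k) =
     (let (p, v) = dec_run n ord x0 rv k;
          d = first_min (\<lambda>a. hnorm (a *\<^sub>v v - x0)) (ord (Suc k))
      in (d * p, d *\<^sub>v v))"

definition decode :: "nat \<Rightarrow> (nat \<Rightarrow> complex mat list) \<Rightarrow> complex vec \<Rightarrow> complex vec \<Rightarrow> complex mat" where
  "decode n ord x0 rv = fst (dec_run n ord x0 rv (2 * n - 1))"

end

theory Submission
  imports Defs
begin

lemma xi_pow: "xi r ^ k = cis (2*pi*real k / real r)"
  unfolding xi_def by (simp add: DeMoivre mult.commute)

lemma xi_pow_root: "r > 0 \<Longrightarrow> (xi r ^ e) ^ r = 1"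
proof -
  assume r: "r > 0"
  have "(xi r ^ e) ^ r = (xi r ^ r) ^ e" by (simp add: power_mult[symmetric] mult.commute)
  also have "xi r ^ r = 1" using r by (simp add: xi_pow)
  finally show ?thesis by simp
qed

lemma root_xi: "r > 0 \<Longrightarrow> c ^ r = 1 \<Longrightarrow> \<exists>e<r. c = xi r ^ e"
  using bij_betw_roots_unity[of r] unfolding bij_betw_def xi_pow by auto

lemma root_norm: "r > 0 \<Longrightarrow> (c::complex) ^ r = 1 \<Longrightarrow> cmod c = 1"
  by (metis norm_one norm_power power_eq_1_iff norm_ge_zero neq0_conv)

definition monom :: "nat \<Rightarrow> (nat \<Rightarrow> nat) \<Rightarrow> (nat \<Rightarrow> complex) \<Rightarrow> complex mat" where
  "monom n \<sigma> c = mat n n (\<lambda>(i,j). if i = \<sigma> j then c j else 0)"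

lemma Grn_iff: "A \<in> Grn r n \<longleftrightarrow> (\<exists>\<sigma> c. \<sigma> permutes {..<n} \<and> (\<forall>j<n. c j ^ r = 1) \<and> A = monom n \<sigma> c)"
proof
  assume "A \<in> Grn r n"
  then obtain \<sigma> c where A: "A \<in> carrier_mat n n" "\<sigma> permutes {..<n}" "\<forall>j<n. c j ^ r = 1"
     "\<forall>i<n. \<forall>j<n. A $$ (i,j) = (if i = \<sigma> j then c j else 0)" unfolding Grn_def by auto
  have "A = monom n \<sigma> c" by (rule eq_matI) (use A in \<open>auto simp: monom_def\<close>)
  thus "\<exists>\<sigma> c. \<sigma> permutes {..<n} \<and> (\<forall>j<n. c j ^ r = 1) \<and> A = monom n \<sigma> c" using A by blast
next
  assume "\<exists>\<sigma> c. \<sigma> permutes {..<n} \<and> (\<forall>j<n. c j ^ r = 1) \<and> A = monom n \<sigma> c"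
  thus "A \<in> Grn r n" unfolding Grn_def monom_def by fastforce
qed

lemma monom_mult:
  assumes \<tau>: "\<tau> permutes {..<n}"
  shows "monom n \<sigma> c * monom n \<tau> d = monom n (\<sigma> \<circ> \<tau>) (\<lambda>j. c (\<tau> j) * d j)"
proof (rule eq_matI)
  fix i j assume ij: "i < dim_row (monom n (\<sigma> \<circ> \<tau>) (\<lambda>j. c (\<tau> j) * d j))" "j < dim_col (monom n (\<sigma> \<circ> \<tau>) (\<lambda>j. c (\<tau> j) * d j))"
  hence i: "i < n" and j: "j < n" by (auto simp: monom_def)
  have tj: "\<tau> j < n" using permutes_in_image[OF \<tau>, of j] j by simp
  have "(monom n \<sigma> c * monom n \<tau> d) $$ (i,j) = (\<Sum>k<n. (if i = \<sigma> k then c k else 0) * (if k = \<tau> j then d j else 0))"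
    using i j by (simp add: monom_def scalar_prod_def atLeast0LessThan)
  also have "\<dots> = (\<Sum>k<n. if k = \<tau> j then (if i = \<sigma> k then c k else 0) * d j else 0)"
    by (rule sum.cong) auto
  also have "\<dots> = (if i = \<sigma> (\<tau> j) then c (\<tau> j) * d j else 0)"
    using tj by simp
  finally show "(monom n \<sigma> c * monom n \<tau> d) $$ (i,j) = monom n (\<sigma> \<circ> \<tau>) (\<lambda>j. c (\<tau> j) * d j) $$ (i,j)"
    using i j by (simp add: monom_def)
qed (auto simp: monom_def)

lemma monom_Grn: "\<sigma> permutes {..<n} \<Longrightarrow> (\<forall>j<n. c j ^ r = 1) \<Longrightarrow> monom n \<sigma> c \<in> Grn r n"
  unfolding Grn_iff by blast

lemma Grn_mult: assumes "A \<in> Grn r n" "B \<in> Grn r n" shows "A * B \<in> Grn r n"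
proof -
  obtain \<sigma> c where A: "\<sigma> permutes {..<n}" "\<forall>j<n. c j ^ r = 1" "A = monom n \<sigma> c" using assms(1) Grn_iff by blast
  obtain \<tau> d where B: "\<tau> permutes {..<n}" "\<forall>j<n. d j ^ r = 1" "B = monom n \<tau> d" using assms(2) Grn_iff by blast
  have "A * B = monom n (\<sigma> \<circ> \<tau>) (\<lambda>j. c (\<tau> j) * d j)" using A B monom_mult by simp
  moreover have "(\<sigma> \<circ> \<tau>) permutes {..<n}" using A B by (simp add: permutes_compose)
  moreover have "\<forall>j<n. (c (\<tau> j) * d j) ^ r = 1"
  proof (intro allI impI)
    fix j assume j: "j < n"
    have "\<tau> j < n" using permutes_in_image[OF B(1), of j] j by simp
    thus "(c (\<tau> j) * d j) ^ r = 1" using A B j by (simp add: power_mult_distrib)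
  qed
  ultimately show ?thesis using monom_Grn by simp
qed

lemma one_monom: "1\<^sub>m n = monom n id (\<lambda>_. 1)"
  by (rule eq_matI) (auto simp: monom_def)

lemma Grn_one: "1\<^sub>m n \<in> Grn r n"
  unfolding one_monom by (rule monom_Grn) (auto intro: permutes_id)

lemma amat_pow: "amat r n i ^\<^sub>m e = monom n id (\<lambda>j. if j = i - 1 then xi r ^ e else 1)"
proof (induction e)
  case 0 thus ?case by (simp add: one_monom[symmetric]) (rule eq_matI, auto simp: monom_def amat_def)
next
  case (Suc e)
  have "amat r n i = monom n id (\<lambda>j. if j = i - 1 then xi r else 1)"
    by (rule eq_matI) (auto simp: amat_def monom_def)
  hence "amat r n i ^\<^sub>m Suc e = monom n id (\<lambda>j. if j = i - 1 then xi r ^ e else 1) * monom n id (\<lambda>j. if j = i - 1 then xi r else 1)"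
    using Suc.IH by (simp del: id_apply)
  also have "\<dots> = monom n id (\<lambda>j. if j = i - 1 then xi r ^ Suc e else 1)"
    by (subst monom_mult, rule permutes_id, simp, rule arg_cong[where f="monom n id"], auto)
  finally show ?case .
qed

lemma amat_pow_Grn: "r > 0 \<Longrightarrow> amat r n i ^\<^sub>m e \<in> Grn r n"
  unfolding amat_pow by (rule monom_Grn) (auto intro: permutes_id simp: xi_pow_root)

lemma bmat_monom: assumes "1 \<le> j" "j < n" shows "bmat n j = monom n (Transposition.transpose (j-1) j) (\<lambda>_. 1)"
  by (rule eq_matI) (use assms in \<open>auto simp: bmat_def monom_def transpose_def\<close>)

lemma bmat_Grn: assumes "1 \<le> j" "j < n" shows "bmat n j \<in> Grn r n"
  unfolding bmat_monom[OF assms] by (rule monom_Grn) (use assms in \<open>auto intro!: permutes_swap_id\<close>)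

lemma foldr_bmat_Grn: "(\<forall>j\<in>set js. 1 \<le> j \<and> j < n) \<Longrightarrow> foldr (\<lambda>j M. bmat n j * M) js (1\<^sub>m n) \<in> Grn r n"
  by (induction js) (simp_all add: Grn_one Grn_mult bmat_Grn)

lemma bprod_Grn: "1 \<le> i \<Longrightarrow> l < n \<Longrightarrow> bprod n i l \<in> Grn r n"
  unfolding bprod_def by (rule foldr_bmat_Grn) auto

lemma Grn_carrier: "A \<in> Grn r n \<Longrightarrow> A \<in> carrier_mat n n"
  unfolding Grn_def by auto

lemma CL_Grn:
  assumes "r > 0" "k \<in> {1..2*n-1}" "A \<in> CL r n k"
  shows "A \<in> Grn r n"
  using assms unfolding CL_def by (auto split: if_splits intro: amat_pow_Grn bprod_Grn Grn_one)

lemma monom_mult_vec: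
  assumes "v \<in> carrier_vec n" "p < n"
  shows "(monom n \<sigma> c *\<^sub>v v) $ p = (\<Sum>j<n. (if p = \<sigma> j then c j else 0) * v $ j)"
  using assms by (simp add: monom_def scalar_prod_def atLeast0LessThan)

lemma amat_pow_vec:
  assumes "v \<in> carrier_vec n"
  shows "amat r n i ^\<^sub>m e *\<^sub>v v = vec n (\<lambda>p. if p = i - 1 then xi r ^ e * v $ p else v $ p)"
proof (rule eq_vecI)
  fix p assume "p < dim_vec (vec n (\<lambda>p. if p = i - 1 then xi r ^ e * v $ p else v $ p))"
  hence p: "p < n" by simp
  have "(amat r n i ^\<^sub>m e *\<^sub>v v) $ p = (\<Sum>j<n. (if p = j then (if j = i - 1 then xi r ^ e else 1) else 0) * v $ j)"
    unfolding amat_pow monom_mult_vec[OF assms p] by simp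
  also have "\<dots> = (\<Sum>j<n. if j = p then (if p = i - 1 then xi r ^ e else 1) * v $ p else 0)"
    by (rule sum.cong) auto
  also have "\<dots> = (if p = i - 1 then xi r ^ e * v $ p else v $ p)" using p by simp
  finally show "(amat r n i ^\<^sub>m e *\<^sub>v v) $ p = vec n (\<lambda>p. if p = i - 1 then xi r ^ e * v $ p else v $ p) $ p"
    using p by simp
qed (simp add: amat_pow monom_def)

lemma bmat_vec:
  assumes "v \<in> carrier_vec n" "1 \<le> j" "j < n"
  shows "bmat n j *\<^sub>v v = vec n (\<lambda>p. v $ (Transposition.transpose (j-1) j p))"
proof (rule eq_vecI)
  fix p assume "p < dim_vec (vec n (\<lambda>p. v $ (Transposition.transpose (j-1) j p)))"
  hence p: "p < n" by simp
  let ?t = "Transposition.transpose (j-1) j"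
  have tp: "?t p < n" using p assms by (auto simp: transpose_def)
  have "(bmat n j *\<^sub>v v) $ p = (\<Sum>q<n. (if p = ?t q then 1 else 0) * v $ q)"
    unfolding bmat_monom[OF assms(2,3)] using monom_mult_vec[OF assms(1) p] by simp
  also have "\<dots> = (\<Sum>q<n. if q = ?t p then v $ ?t p else 0)"
    by (rule sum.cong) (auto simp: transpose_def)
  also have "\<dots> = v $ ?t p" using tp by simp
  finally show "(bmat n j *\<^sub>v v) $ p = vec n (\<lambda>p. v $ (?t p)) $ p" using p by simp
qed (simp add: bmat_def)

definition ins :: "nat \<Rightarrow> nat \<Rightarrow> (nat \<Rightarrow> 'a) \<Rightarrow> nat \<Rightarrow> 'a" where
  "ins i l f p = (if p < i - 1 then f p else if p = i - 1 then f l else if p \<le> l then f (p - 1) else f p)"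

lemma bprod_vec:
  assumes "v \<in> carrier_vec n" "1 \<le> i" "i \<le> Suc l" "l < n"
  shows "bprod n i l *\<^sub>v v = vec n (ins i l (\<lambda>q. v $ q))"
  using assms(2,3)
proof (induction "Suc l - i" arbitrary: i)
  case 0
  hence i: "i = Suc l" by simp
  have "bprod n i l = 1\<^sub>m n" unfolding bprod_def i by simp
  thus ?case using assms(1) by (auto simp: ins_def i intro!: eq_vecI)
next
  case (Suc d)
  hence il: "i \<le> l" "Suc l - Suc i = d" by auto
  have "bprod n i l = bmat n i * bprod n (Suc i) l"
    unfolding bprod_def using il by (subst upt_conv_Cons) auto
  moreover have IH: "bprod n (Suc i) l *\<^sub>v v = vec n (ins (Suc i) l (\<lambda>q. v $ q))"
    using Suc il by simp
  moreover have "bprod n (Suc i) l \<in> carrier_mat n n" using bprod_Grn[of "Suc i" l n] assms Grn_carrier by auto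
  moreover have "bmat n i \<in> carrier_mat n n" by (simp add: bmat_def)
  ultimately have "bprod n i l *\<^sub>v v = bmat n i *\<^sub>v vec n (ins (Suc i) l (\<lambda>q. v $ q))"
    using assms assoc_mult_mat_vec[of "bmat n i" n n "bprod n (Suc i) l" n v] by simp
  also have "\<dots> = vec n (\<lambda>p. vec n (ins (Suc i) l (\<lambda>q. v $ q)) $ (Transposition.transpose (i-1) i p))"
    using bmat_vec Suc.prems il assms by simp
  also have "\<dots> = vec n (ins i l (\<lambda>q. v $ q))"
    using Suc.prems il assms by (intro eq_vecI) (auto simp: ins_def transpose_def)
  finally show ?case .
qed

lemma first_min_prop:
  assumes "xs \<noteq> []"
  shows "first_min f xs \<in> set xs \<and> (\<forall>b\<in>set xs. f (first_min f xs) \<le> f b)"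
proof -
  have fin: "finite (f ` set xs)" "f ` set xs \<noteq> {}" using assms by auto
  obtain a where a: "a \<in> set xs" "f a = Min (f ` set xs)" using Min_in[OF fin] by auto
  have "\<forall>b\<in>set xs. f a \<le> f b" using a fin by auto
  hence "a \<in> set (filter (\<lambda>a. \<forall>b\<in>set xs. f a \<le> f b) xs)" using a by auto
  hence ne: "filter (\<lambda>a. \<forall>b\<in>set xs. f a \<le> f b) xs \<noteq> []" by (metis empty_iff empty_set)
  hence "hd (filter (\<lambda>a. \<forall>b\<in>set xs. f a \<le> f b) xs) \<in> set (filter (\<lambda>a. \<forall>b\<in>set xs. f a \<le> f b) xs)"
    by (rule hd_in_set)
  thus ?thesis unfolding first_min_def by auto
qed

lemma sum_diff_local:
  fixes f g :: "nat \<Rightarrow> real"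
  assumes "finite A" "S \<subseteq> A" "\<forall>i\<in>A - S. f i = g i"
  shows "sum f A = sum g A + sum (\<lambda>i. f i - g i) S"
proof -
  have "sum (\<lambda>i. f i - g i) A = sum (\<lambda>i. f i - g i) S"
    using assms by (intro sum.mono_neutral_right) auto
  thus ?thesis by (simp add: sum_subtractf)
qed

lemma rearr:
  fixes a b :: "nat \<Rightarrow> real"
  assumes "\<pi> permutes {..<n}" "\<forall>i j. i \<le> j \<and> j < n \<longrightarrow> a i \<le> a j" "\<forall>i j. i \<le> j \<and> j < n \<longrightarrow> b i \<le> b j"
  shows "(\<Sum>i<n. b (\<pi> i) * a i) \<le> (\<Sum>i<n. b i * a i)"
  using assms
proof (induction n arbitrary: \<pi>)
  case 0 thus ?case by simp
next
  case (Suc n)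
  define \<pi>' where "\<pi>' = Transposition.transpose n (\<pi> n) \<circ> \<pi>"
  have p': "\<pi>' permutes {..<n}" unfolding \<pi>'_def
    by (rule permutes_insert_lemma) (use Suc.prems(1) in \<open>simp add: lessThan_Suc\<close>)
  have pn: "\<pi>' n = n" by (simp add: \<pi>'_def)
  have IH: "(\<Sum>i<n. b (\<pi>' i) * a i) \<le> (\<Sum>i<n. b i * a i)"
    using Suc.IH[OF p'] Suc.prems by auto
  have A: "(\<Sum>i<Suc n. b (\<pi>' i) * a i) \<le> (\<Sum>i<Suc n. b i * a i)"
    using IH pn by simp
  have pin: "\<pi> n < Suc n" using permutes_in_image[OF Suc.prems(1), of n] by simp
  have B: "(\<Sum>i<Suc n. b (\<pi> i) * a i) \<le> (\<Sum>i<Suc n. b (\<pi>' i) * a i)"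
  proof (cases "\<pi> n = n")
    case True
    hence "\<pi>' = \<pi>" by (simp add: \<pi>'_def)
    thus ?thesis by simp
  next
    case False
    obtain j where j: "\<pi> j = n" using permutes_surj[OF Suc.prems(1)] by (metis surjD)
    have jn: "j < Suc n" using permutes_in_image[OF Suc.prems(1), of j] j by simp
    have jne: "j \<noteq> n" using j False by auto
    have same: "\<forall>i\<in>{..<Suc n} - {j, n}. b (\<pi>' i) * a i = b (\<pi> i) * a i"
    proof
      fix i assume i: "i \<in> {..<Suc n} - {j, n}"
      have "\<pi> i \<noteq> n" using i j permutes_inj[OF Suc.prems(1)] by (metis DiffD2 injD insertCI)
      moreover have "\<pi> i \<noteq> \<pi> n" using i permutes_inj[OF Suc.prems(1)] by (metis DiffD2 injD insertCI)
      ultimately show "b (\<pi>' i) * a i = b (\<pi> i) * a i" by (simp add: \<pi>'_def transpose_def)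
    qed
    have E1: "(\<Sum>i<Suc n. b (\<pi>' i) * a i) = (\<Sum>i<Suc n. b (\<pi> i) * a i) +
           (\<Sum>i\<in>{j,n}. b (\<pi>' i) * a i - b (\<pi> i) * a i)"
      by (rule sum_diff_local) (use jn same in auto)
    have E2: "(\<Sum>i\<in>{j,n}. b (\<pi>' i) * a i - b (\<pi> i) * a i) = (b n - b (\<pi> n)) * (a n - a j)"
      using jne j by (simp add: \<pi>'_def transpose_def algebra_simps)
    have E3: "(b n - b (\<pi> n)) * (a n - a j) \<ge> 0" using Suc.prems pin jn by (intro mult_nonneg_nonneg) auto
    show ?thesis using E1 E2 E3 by linarith
  qed
  show ?case using A B by linarith
qed

definition Dist :: "complex vec \<Rightarrow> nat \<Rightarrow> (nat \<Rightarrow> complex) \<Rightarrow> real" where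
  "Dist x0 n w = (\<Sum>i<n. (cmod (w i - x0 $ i))\<^sup>2)"

lemma hnorm_Dist:
  assumes "w \<in> carrier_vec n" "x0 \<in> carrier_vec n"
  shows "hnorm (w - x0) = sqrt (Dist x0 n (\<lambda>i. w $ i))"
  using assms unfolding hnorm_def Dist_def by simp

lemma hnorm_le_Dist:
  assumes "w \<in> carrier_vec n" "w' \<in> carrier_vec n" "x0 \<in> carrier_vec n"
    "hnorm (w - x0) \<le> hnorm (w' - x0)"
  shows "Dist x0 n (\<lambda>i. w $ i) \<le> Dist x0 n (\<lambda>i. w' $ i)"
  using assms hnorm_Dist by (metis real_sqrt_le_iff)

lemma term_expand:
  assumes "Im y = 0"
  shows "(cmod (z - y))\<^sup>2 = (cmod z)\<^sup>2 - 2 * Re y * Re z + (Re y)\<^sup>2"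
  unfolding cmod_power2 using assms by (simp add: power2_eq_square algebra_simps)

lemma swap_Dist:
  assumes x0: "\<forall>i<n. Im (x0 $ i) = 0" "\<forall>i j. i < j \<and> j < n \<longrightarrow> Re (x0 $ i) < Re (x0 $ j)"
    and ab: "a < b" "b < n"
    and w': "w' a = w b" "w' b = w a" "\<forall>i<n. i \<noteq> a \<and> i \<noteq> b \<longrightarrow> w' i = w i"
    and le: "Dist x0 n w \<le> Dist x0 n w'"
  shows "Re (w a) \<le> Re (w b)"
proof -
  have "Dist x0 n w' = Dist x0 n w + (\<Sum>i\<in>{a,b}. (cmod (w' i - x0 $ i))\<^sup>2 - (cmod (w i - x0 $ i))\<^sup>2)"
    unfolding Dist_def by (rule sum_diff_local) (use ab w' in auto)
  also have "(\<Sum>i\<in>{a,b}. (cmod (w' i - x0 $ i))\<^sup>2 - (cmod (w i - x0 $ i))\<^sup>2)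
      = 2 * (Re (x0 $ b) - Re (x0 $ a)) * (Re (w b) - Re (w a))"
    using ab w' x0(1) by (simp add: term_expand algebra_simps)
  finally have "Dist x0 n w' = Dist x0 n w + 2 * ((Re (x0 $ b) - Re (x0 $ a)) * (Re (w b) - Re (w a)))"
    by (simp only: mult.assoc)
  hence "0 \<le> 2 * ((Re (x0 $ b) - Re (x0 $ a)) * (Re (w b) - Re (w a)))" using le by linarith
  hence "0 \<le> (Re (x0 $ b) - Re (x0 $ a)) * (Re (w b) - Re (w a))" by (simp add: mult.commute)
  moreover have "Re (x0 $ b) - Re (x0 $ a) > 0" using x0(2) ab by auto
  ultimately show ?thesis by (simp add: zero_le_mult_iff)
qed

lemma single_Dist:
  assumes x0: "Im (x0 $ m) = 0" "Re (x0 $ m) > 0"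
    and m: "m < n"
    and w': "\<forall>i<n. i \<noteq> m \<longrightarrow> w' i = w i" "cmod (w' m) = cmod (w m)"
    and le: "Dist x0 n w \<le> Dist x0 n w'"
  shows "Re (w' m) \<le> Re (w m)"
proof -
  have "Dist x0 n w' = Dist x0 n w + (\<Sum>i\<in>{m}. (cmod (w' i - x0 $ i))\<^sup>2 - (cmod (w i - x0 $ i))\<^sup>2)"
    unfolding Dist_def by (rule sum_diff_local) (use m w' in auto)
  also have "(\<Sum>i\<in>{m}. (cmod (w' i - x0 $ i))\<^sup>2 - (cmod (w i - x0 $ i))\<^sup>2)
      = 2 * Re (x0 $ m) * (Re (w m) - Re (w' m))"
    using w' x0(1) by (simp add: term_expand algebra_simps)
  finally have "Dist x0 n w' = Dist x0 n w + 2 * (Re (x0 $ m) * (Re (w m) - Re (w' m)))"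
    by (simp only: mult.assoc)
  hence "0 \<le> 2 * (Re (x0 $ m) * (Re (w m) - Re (w' m)))" using le by linarith
  hence "0 \<le> Re (x0 $ m) * (Re (w m) - Re (w' m))" by simp
  thus ?thesis using x0(2) by (simp add: zero_le_mult_iff)
qed

lemma ins_sorted:
  fixes f :: "nat \<Rightarrow> complex"
  assumes q: "1 \<le> q" "q \<le> Suc l"
    and c1: "2 \<le> q \<Longrightarrow> Re (f (q-2)) \<le> Re (f l)"
    and c2: "q \<le> l \<Longrightarrow> Re (f l) \<le> Re (f (q-1))"
    and s: "\<forall>i j. i \<le> j \<and> j < l \<longrightarrow> Re (f i) \<le> Re (f j)"
    and ij: "i \<le> j" "j < Suc l"
  shows "Re (ins q l f i) \<le> Re (ins q l f j)"
proof -
  consider "j < q - 1" | "j = q - 1" | "q - 1 < j" by linarith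
  thus ?thesis
  proof cases
    case 1 thus ?thesis using ij s q by (auto simp: ins_def)
  next
    case 2
    show ?thesis
    proof (cases "i = j")
      case True thus ?thesis by simp
    next
      case False
      hence "i < q - 1" "2 \<le> q" using 2 ij by auto
      hence "i \<le> q - 2" "q - 2 < l" using q by linarith+
      hence "Re (f i) \<le> Re (f (q-2))" using s by blast
      thus ?thesis using c1 \<open>2 \<le> q\<close> \<open>i < q - 1\<close> 2 by (auto simp: ins_def)
    qed
  next
    case 3
    have fj: "ins q l f j = f (j - 1)" using 3 ij by (auto simp: ins_def)
    consider "i < q - 1" | "i = q - 1" | "q - 1 < i" by linarith
    thus ?thesis
    proof cases
      case 1
      hence "i \<le> j - 1" "j - 1 < l" using 3 ij by linarith+
      hence "Re (f i) \<le> Re (f (j-1))" using s by blast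
      thus ?thesis using fj 1 by (auto simp: ins_def)
    next
      case 2
      have "q \<le> l" using 3 ij q by auto
      hence "Re (f l) \<le> Re (f (q-1))" by (rule c2)
      moreover have "q - 1 \<le> j - 1" "j - 1 < l" using 3 ij q by linarith+
      hence "Re (f (q-1)) \<le> Re (f (j-1))" using s by blast
      ultimately show ?thesis using fj 2 by (auto simp: ins_def)
    next
      case 4: 3
      hence "i - 1 \<le> j - 1" "j - 1 < l" using 3 ij by linarith+
      hence "Re (f (i-1)) \<le> Re (f (j-1))" using s by blast
      thus ?thesis using fj 4 ij by (auto simp: ins_def)
    qed
  qed
qed

definition maxrot :: "nat \<Rightarrow> complex \<Rightarrow> bool" where
  "maxrot r z = (\<forall>c::complex. c ^ r = 1 \<longrightarrow> Re (c * z) \<le> Re z)"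

lemma Dist_vec: "Dist x0 n (\<lambda>i. vec n g $ i) = Dist x0 n g"
  unfolding Dist_def by (rule sum.cong) auto

lemma rot_step:
  assumes r: "r > 0" and x0: "x0 \<in> carrier_vec n" "Im (x0 $ m) = 0" "Re (x0 $ m) > 0"
    and m: "m < n" and v: "v \<in> carrier_vec n"
    and d: "d \<in> {amat r n (Suc m) ^\<^sub>m e | e. e < r}"
    and opt: "\<forall>b \<in> {amat r n (Suc m) ^\<^sub>m e | e. e < r}. hnorm (d *\<^sub>v v - x0) \<le> hnorm (b *\<^sub>v v - x0)"
  shows "\<exists>z. d *\<^sub>v v = vec n (\<lambda>p. if p = m then z else v $ p) \<and> maxrot r z"
proof -
  obtain e where e: "e < r" "d = amat r n (Suc m) ^\<^sub>m e" using d by auto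
  have w: "d *\<^sub>v v = vec n (\<lambda>p. if p = m then xi r ^ e * v $ p else v $ p)"
    unfolding e using amat_pow_vec[OF v] by simp
  have "maxrot r (xi r ^ e * v $ m)" unfolding maxrot_def
  proof (intro allI impI)
    fix c :: complex assume c: "c ^ r = 1"
    have "(c * xi r ^ e) ^ r = 1" using c xi_pow_root[OF r] by (simp add: power_mult_distrib)
    then obtain e' where e': "e' < r" "c * xi r ^ e = xi r ^ e'" using root_xi[OF r] by blast
    define b where "b = amat r n (Suc m) ^\<^sub>m e'"
    have wb: "b *\<^sub>v v = vec n (\<lambda>p. if p = m then xi r ^ e' * v $ p else v $ p)"
      unfolding b_def using amat_pow_vec[OF v] by simp
    have "hnorm (d *\<^sub>v v - x0) \<le> hnorm (b *\<^sub>v v - x0)" using opt e' b_def by blast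
    hence "Dist x0 n (\<lambda>i. (d *\<^sub>v v) $ i) \<le> Dist x0 n (\<lambda>i. (b *\<^sub>v v) $ i)"
      by (intro hnorm_le_Dist[OF _ _ x0(1)]) (auto simp: w wb)
    hence le: "Dist x0 n (\<lambda>p. if p = m then xi r ^ e * v $ p else v $ p)
             \<le> Dist x0 n (\<lambda>p. if p = m then xi r ^ e' * v $ p else v $ p)"
      unfolding w wb Dist_vec .
    have n1: "cmod (xi r ^ e') = 1" "cmod (xi r ^ e) = 1" using root_norm[OF r] xi_pow_root[OF r] by auto
    have le2: "Re (xi r ^ e' * v $ m) \<le> Re (xi r ^ e * v $ m)"
      using single_Dist[OF x0(2,3) m _ _ le] n1 by (simp add: norm_mult)
    have eq: "c * (xi r ^ e * v $ m) = xi r ^ e' * v $ m" using e'(2) by (metis mult.assoc)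
    show "Re (c * (xi r ^ e * v $ m)) \<le> Re (xi r ^ e * v $ m)" unfolding eq by (rule le2)
  qed
  moreover have "d *\<^sub>v v = vec n (\<lambda>p. if p = m then xi r ^ e * v $ m else v $ p)"
    unfolding w by (rule eq_vecI) auto
  ultimately show ?thesis by blast
qed

lemma bprod_Suc: "bprod n (Suc l) l = 1\<^sub>m n"
  unfolding bprod_def by simp

lemma ins_step:
  assumes x0: "x0 \<in> carrier_vec n" "\<forall>i<n. Im (x0 $ i) = 0"
      "\<forall>i j. i < j \<and> j < n \<longrightarrow> Re (x0 $ i) < Re (x0 $ j)"
    and l: "1 \<le> l" "l < n" and v: "v \<in> carrier_vec n"
    and d: "d \<in> {1\<^sub>m n} \<union> {bprod n i l | i. 1 \<le> i \<and> i \<le> l}"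
    and opt: "\<forall>b \<in> {1\<^sub>m n} \<union> {bprod n i l | i. 1 \<le> i \<and> i \<le> l}. hnorm (d *\<^sub>v v - x0) \<le> hnorm (b *\<^sub>v v - x0)"
    and s: "\<forall>i j. i \<le> j \<and> j < l \<longrightarrow> Re (v $ i) \<le> Re (v $ j)"
  shows "\<exists>q. 1 \<le> q \<and> q \<le> Suc l \<and> d *\<^sub>v v = vec n (ins q l (\<lambda>i. v $ i)) \<and>
          (\<forall>i j. i \<le> j \<and> j < Suc l \<longrightarrow> Re ((d *\<^sub>v v) $ i) \<le> Re ((d *\<^sub>v v) $ j))"
proof -
  let ?f = "\<lambda>i. v $ i"
  have cand: "{1\<^sub>m n} \<union> {bprod n i l | i. 1 \<le> i \<and> i \<le> l} = {bprod n q l | q. 1 \<le> q \<and> q \<le> Suc l}"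
    using bprod_Suc[of n l] by (auto simp: le_Suc_eq) (rule exI[of _ "Suc l"], simp)
  obtain q where q: "1 \<le> q" "q \<le> Suc l" "d = bprod n q l" using d cand by auto
  have act: "\<And>q'. 1 \<le> q' \<Longrightarrow> q' \<le> Suc l \<Longrightarrow> bprod n q' l *\<^sub>v v = vec n (ins q' l ?f)"
    using bprod_vec[OF v _ _ l(2)] by blast
  have optq: "\<And>q'. 1 \<le> q' \<Longrightarrow> q' \<le> Suc l \<Longrightarrow> Dist x0 n (ins q l ?f) \<le> Dist x0 n (ins q' l ?f)"
  proof -
    fix q' assume q': "1 \<le> q'" "q' \<le> Suc l"
    have "hnorm (d *\<^sub>v v - x0) \<le> hnorm (bprod n q' l *\<^sub>v v - x0)" using opt cand q' by blast
    hence "Dist x0 n (\<lambda>i. (d *\<^sub>v v) $ i) \<le> Dist x0 n (\<lambda>i. (bprod n q' l *\<^sub>v v) $ i)"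
      by (intro hnorm_le_Dist[OF _ _ x0(1)]) (auto simp: q act[OF q(1,2)] act[OF q'])
    thus "Dist x0 n (ins q l ?f) \<le> Dist x0 n (ins q' l ?f)" unfolding q act[OF q(1,2)] act[OF q'] Dist_vec .
  qed
  have c1: "Re (?f (q-2)) \<le> Re (?f l)" if q2: "2 \<le> q"
  proof -
    obtain t where t: "q = Suc (Suc t)" using q2 by (metis add_2_eq_Suc le_Suc_ex)
    have le: "Dist x0 n (ins q l ?f) \<le> Dist x0 n (ins (Suc t) l ?f)" using optq[of "Suc t"] q t by simp
    have "Re (ins q l ?f t) \<le> Re (ins q l ?f (Suc t))"
      by (rule swap_Dist[OF x0(2,3), of t "Suc t" "ins (Suc t) l ?f", OF _ _ _ _ _ le]) (use q t l in \<open>auto simp: ins_def\<close>)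
    thus ?thesis using t by (simp add: ins_def)
  qed
  have c2: "Re (?f l) \<le> Re (?f (q-1))" if ql: "q \<le> l"
  proof -
    obtain t where t: "q = Suc t" using q(1) by (cases q) auto
    have le: "Dist x0 n (ins q l ?f) \<le> Dist x0 n (ins (Suc q) l ?f)" using optq[of "Suc q"] q ql by simp
    have "Re (ins q l ?f t) \<le> Re (ins q l ?f (Suc t))"
      by (rule swap_Dist[OF x0(2,3), of t "Suc t" "ins (Suc q) l ?f", OF _ _ _ _ _ le]) (use q t ql l in \<open>auto simp: ins_def\<close>)
    thus ?thesis using ql t by (simp add: ins_def)
  qed
  have "\<forall>i j. i \<le> j \<and> j < Suc l \<longrightarrow> Re ((d *\<^sub>v v) $ i) \<le> Re ((d *\<^sub>v v) $ j)"
  proof (intro allI impI)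
    fix i j assume ij: "i \<le> j \<and> j < Suc l"
    have "Re (ins q l ?f i) \<le> Re (ins q l ?f j)"
      by (rule ins_sorted[OF q(1,2) c1 c2 s]) (use ij in auto)
    thus "Re ((d *\<^sub>v v) $ i) \<le> Re ((d *\<^sub>v v) $ j)" using ij l q act by simp
  qed
  thus ?thesis using q act by blast
qed

lemma monom_vec_perm:
  assumes "\<sigma> permutes {..<n}" "x \<in> carrier_vec n" "j < n"
  shows "(monom n \<sigma> c *\<^sub>v x) $ (\<sigma> j) = c j * x $ j"
proof -
  have sj: "\<sigma> j < n" using permutes_in_image[OF assms(1), of j] assms(3) by simp
  have "(monom n \<sigma> c *\<^sub>v x) $ (\<sigma> j) = (\<Sum>k<n. (if \<sigma> j = \<sigma> k then c k else 0) * x $ k)"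
    by (rule monom_mult_vec[OF assms(2) sj])
  also have "\<dots> = (\<Sum>k<n. if k = j then c j * x $ j else 0)"
    by (rule sum.cong) (use permutes_inj[OF assms(1)] in \<open>auto dest: injD\<close>)
  also have "\<dots> = c j * x $ j" using assms(3) by simp
  finally show ?thesis .
qed

lemma Dist_expand:
  assumes "\<forall>i<n. Im (x0 $ i) = 0"
  shows "Dist x0 n w = (\<Sum>i<n. (cmod (w i))\<^sup>2) - 2 * (\<Sum>i<n. Re (x0 $ i) * Re (w i)) + (\<Sum>i<n. (Re (x0 $ i))\<^sup>2)"
proof -
  have "Dist x0 n w = (\<Sum>i<n. (cmod (w i))\<^sup>2 - 2 * (Re (x0 $ i) * Re (w i)) + (Re (x0 $ i))\<^sup>2)"
    unfolding Dist_def by (rule sum.cong) (use assms in \<open>auto simp: term_expand\<close>)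
  thus ?thesis by (simp add: sum.distrib sum_subtractf sum_distrib_left)
qed

lemma norm_sum_perm:
  assumes "\<sigma> permutes {..<n}" "x \<in> carrier_vec n" "r > 0" "\<forall>j<n. c j ^ r = 1"
  shows "(\<Sum>i<n. (cmod ((monom n \<sigma> c *\<^sub>v x) $ i))\<^sup>2) = (\<Sum>j<n. (cmod (x $ j))\<^sup>2)"
proof -
  have "(\<Sum>i<n. (cmod ((monom n \<sigma> c *\<^sub>v x) $ i))\<^sup>2) = (\<Sum>j<n. (cmod ((monom n \<sigma> c *\<^sub>v x) $ (\<sigma> j)))\<^sup>2)"
    using sum.reindex_bij_betw[OF permutes_imp_bij[OF assms(1)], of "\<lambda>i. (cmod ((monom n \<sigma> c *\<^sub>v x) $ i))\<^sup>2"] by simp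
  also have "\<dots> = (\<Sum>j<n. (cmod (x $ j))\<^sup>2)"
    by (rule sum.cong) (use assms root_norm in \<open>auto simp: monom_vec_perm norm_mult\<close>)
  finally show ?thesis .
qed

lemma opt_final:
  assumes r: "r > 0" and x0: "\<forall>i<n. Im (x0 $ i) = 0" "\<forall>i<n. 0 < Re (x0 $ i)"
      "\<forall>i j. i < j \<and> j < n \<longrightarrow> Re (x0 $ i) < Re (x0 $ j)"
    and x: "x \<in> carrier_vec n" and p: "p \<in> Grn r n" and g: "g \<in> Grn r n"
    and mr: "\<forall>j<n. maxrot r ((p *\<^sub>v x) $ j)"
    and so: "\<forall>i j. i \<le> j \<and> j < n \<longrightarrow> Re ((p *\<^sub>v x) $ i) \<le> Re ((p *\<^sub>v x) $ j)"
  shows "Dist x0 n (\<lambda>i. (p *\<^sub>v x) $ i) \<le> Dist x0 n (\<lambda>i. (g *\<^sub>v x) $ i)"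
proof -
  obtain \<sigma> c where G: "\<sigma> permutes {..<n}" "\<forall>j<n. c j ^ r = 1" "g = monom n \<sigma> c" using g Grn_iff by blast
  obtain \<tau> d where P: "\<tau> permutes {..<n}" "\<forall>j<n. d j ^ r = 1" "p = monom n \<tau> d" using p Grn_iff by blast
  define v where "v = p *\<^sub>v x"
  define y where "y = g *\<^sub>v x"
  define u where "u = (\<lambda>i. Re (x0 $ i))"
  have yj: "\<And>j. j < n \<Longrightarrow> y $ (\<sigma> j) = c j * x $ j" unfolding y_def G(3) using monom_vec_perm[OF G(1) x] by blast
  have vj: "\<And>j. j < n \<Longrightarrow> v $ (\<tau> j) = d j * x $ j" unfolding v_def P(3) using monom_vec_perm[OF P(1) x] by blast
  have Ny: "(\<Sum>i<n. (cmod (y $ i))\<^sup>2) = (\<Sum>j<n. (cmod (x $ j))\<^sup>2)"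
    unfolding y_def G(3) by (rule norm_sum_perm[OF G(1) x r G(2)])
  have Nv: "(\<Sum>i<n. (cmod (v $ i))\<^sup>2) = (\<Sum>j<n. (cmod (x $ j))\<^sup>2)"
    unfolding v_def P(3) by (rule norm_sum_perm[OF P(1) x r P(2)])
  have Py: "(\<Sum>i<n. u i * Re (y $ i)) = (\<Sum>j<n. u (\<sigma> j) * Re (c j * x $ j))"
  proof -
    have "(\<Sum>i<n. u i * Re (y $ i)) = (\<Sum>j<n. u (\<sigma> j) * Re (y $ (\<sigma> j)))"
      using sum.reindex_bij_betw[OF permutes_imp_bij[OF G(1)], of "\<lambda>i. u i * Re (y $ i)"] by simp
    also have "\<dots> = (\<Sum>j<n. u (\<sigma> j) * Re (c j * x $ j))" by (rule sum.cong) (auto simp: yj)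
    finally show ?thesis .
  qed
  have step1: "(\<Sum>j<n. u (\<sigma> j) * Re (c j * x $ j)) \<le> (\<Sum>j<n. u (\<sigma> j) * Re (v $ (\<tau> j)))"
  proof (rule sum_mono)
    fix j assume "j \<in> {..<n}"
    hence j: "j < n" by simp
    have tj: "\<tau> j < n" "\<sigma> j < n" using permutes_in_image[OF P(1), of j] permutes_in_image[OF G(1), of j] j by auto
    have dn: "cmod (d j) = 1" using root_norm[OF r] P(2) j by auto
    have "cnj (d j) * d j = 1" using dn by (metis complex_norm_square mult.commute of_real_1 power_one)
    hence eq: "c j * x $ j = (c j * cnj (d j)) * v $ (\<tau> j)" using vj[OF j] by (simp add: algebra_simps)
    have "(c j * cnj (d j)) ^ r = 1" using G(2) P(2) j by (simp add: power_mult_distrib flip: complex_cnj_power)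
    hence "Re (c j * x $ j) \<le> Re (v $ (\<tau> j))" using mr tj unfolding eq v_def maxrot_def by blast
    moreover have "u (\<sigma> j) > 0" using x0(2) tj unfolding u_def by auto
    ultimately show "u (\<sigma> j) * Re (c j * x $ j) \<le> u (\<sigma> j) * Re (v $ (\<tau> j))" by simp
  qed
  have pi: "(\<sigma> \<circ> Hilbert_Choice.inv \<tau>) permutes {..<n}" using G(1) P(1) by (simp add: permutes_compose permutes_inv)
  have step2: "(\<Sum>j<n. u (\<sigma> j) * Re (v $ (\<tau> j))) = (\<Sum>i<n. u ((\<sigma> \<circ> Hilbert_Choice.inv \<tau>) i) * Re (v $ i))"
    using sum.reindex_bij_betw[OF permutes_imp_bij[OF P(1)], of "\<lambda>i. u ((\<sigma> \<circ> Hilbert_Choice.inv \<tau>) i) * Re (v $ i)"]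
    by (simp add: permutes_inverses(2)[OF P(1)])
  have step3: "(\<Sum>i<n. u ((\<sigma> \<circ> Hilbert_Choice.inv \<tau>) i) * Re (v $ i)) \<le> (\<Sum>i<n. u i * Re (v $ i))"
    by (rule rearr[OF pi]) (use so x0(3) in \<open>auto simp: v_def u_def le_less\<close>)
  have "Dist x0 n (\<lambda>i. v $ i) \<le> Dist x0 n (\<lambda>i. y $ i)"
    unfolding Dist_expand[OF x0(1)] using Ny Nv Py step1 step2 step3 unfolding u_def by linarith
  thus ?thesis unfolding v_def y_def .
qed

lemma ins_range: "j < Suc l \<Longrightarrow> \<exists>j'<Suc l. ins q l f j = f j'"
  unfolding ins_def by (auto intro: exI[of _ j] exI[of _ l] exI[of _ "j - 1"])

lemma CL_ne: "r > 0 \<Longrightarrow> CL r n k \<noteq> {}"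
  unfolding CL_def by auto

lemma run_inv:
  assumes r: "r > 0" and x0: "x0 \<in> carrier_vec n" "\<forall>i<n. Im (x0 $ i) = 0" "\<forall>i<n. 0 < Re (x0 $ i)"
      "\<forall>i j. i < j \<and> j < n \<longrightarrow> Re (x0 $ i) < Re (x0 $ j)"
    and ordk: "\<forall>k \<in> {1..2*n-1}. distinct (ord k) \<and> set (ord k) = CL r n k"
    and x: "x \<in> carrier_vec n"
  shows "k \<le> 2*n-1 \<Longrightarrow> fst (dec_run n ord x0 x k) \<in> Grn r n \<and> snd (dec_run n ord x0 x k) \<in> carrier_vec n
     \<and> fst (dec_run n ord x0 x k) *\<^sub>v x = snd (dec_run n ord x0 x k)
     \<and> (\<forall>j < (if k = 0 then 0 else (k+2) div 2). maxrot r (snd (dec_run n ord x0 x k) $ j))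
     \<and> (\<forall>i j. i \<le> j \<and> j < (k+1) div 2 \<longrightarrow> Re (snd (dec_run n ord x0 x k) $ i) \<le> Re (snd (dec_run n ord x0 x k) $ j))"
proof (induction k)
  case 0 thus ?case using x by (simp add: Grn_one)
next
  case (Suc k)
  obtain p v where pv: "dec_run n ord x0 x k = (p, v)" by (metis surj_pair)
  have IH: "p \<in> Grn r n" "v \<in> carrier_vec n" "p *\<^sub>v x = v"
     "\<forall>j < (if k = 0 then 0 else (k+2) div 2). maxrot r (v $ j)"
     "\<forall>i j. i \<le> j \<and> j < (k+1) div 2 \<longrightarrow> Re (v $ i) \<le> Re (v $ j)"
    using Suc pv by auto
  define f where "f = (\<lambda>a. hnorm (a *\<^sub>v v - x0))"
  define d where "d = first_min f (ord (Suc k))"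
  have kk: "Suc k \<in> {1..2*n-1}" using Suc.prems by auto
  have setord: "set (ord (Suc k)) = CL r n (Suc k)" using ordk kk by blast
  have "ord (Suc k) \<noteq> []" using setord CL_ne[OF r, of n "Suc k"] by (metis empty_set)
  hence dmin: "d \<in> CL r n (Suc k)" "\<forall>b \<in> CL r n (Suc k). f d \<le> f b"
    using first_min_prop[of "ord (Suc k)" f] setord unfolding d_def by auto
  have run: "dec_run n ord x0 x (Suc k) = (d * p, d *\<^sub>v v)"
    using pv by (simp add: d_def f_def Let_def)
  have dG: "d \<in> Grn r n" using CL_Grn[OF r kk dmin(1)] .
  have dc: "d \<in> carrier_mat n n" "p \<in> carrier_mat n n" using dG IH(1) Grn_carrier by auto
  have A: "d * p \<in> Grn r n" using Grn_mult[OF dG IH(1)] .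
  have B: "d *\<^sub>v v \<in> carrier_vec n" using dc IH(2) by simp
  have C: "(d * p) *\<^sub>v x = d *\<^sub>v v" using assoc_mult_mat_vec[OF dc x] IH(3) by simp
  have n1: "n \<ge> 1" using Suc.prems by auto
  have D: "(\<forall>j < (Suc k + 2) div 2. maxrot r ((d *\<^sub>v v) $ j))
     \<and> (\<forall>i j. i \<le> j \<and> j < (Suc k + 1) div 2 \<longrightarrow> Re ((d *\<^sub>v v) $ i) \<le> Re ((d *\<^sub>v v) $ j))"
  proof (cases "k = 0")
    case True
    have CL1: "CL r n (Suc k) = {amat r n (Suc 0) ^\<^sub>m e | e. e < r}" using True by (simp add: CL_def)
    obtain z where z: "d *\<^sub>v v = vec n (\<lambda>p. if p = 0 then z else v $ p)" "maxrot r z"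
      using rot_step[OF r x0(1), of 0 v d] x0 n1 IH(2) dmin CL1 unfolding f_def by auto
    show ?thesis using z True n1 by auto
  next
    case False
    show ?thesis
    proof (cases "even (Suc k)")
      case True
      then obtain l where l: "Suc k = 2 * l" by blast
      have l1: "1 \<le> l" "l < n" using l False Suc.prems by auto
      have CL1: "CL r n (Suc k) = {amat r n (Suc l) ^\<^sub>m e | e. e < r}" using True l False by (simp add: CL_def)
      obtain z where z: "d *\<^sub>v v = vec n (\<lambda>p. if p = l then z else v $ p)" "maxrot r z"
        using rot_step[OF r x0(1), of l v d] x0 l1 IH(2) dmin CL1 unfolding f_def by auto
      have e1: "(k + 2) div 2 = l" "(k+1) div 2 = l" "(Suc k + 2) div 2 = Suc l" "(Suc k + 1) div 2 = l" using l by auto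
      show ?thesis using z IH(4,5) False l1 unfolding e1 by (auto simp: less_Suc_eq)
    next
      case odd: False
      then obtain l where l: "Suc k = 2 * l + 1" by (metis oddE)
      have l1: "1 \<le> l" "l < n" using l False Suc.prems by auto
      have CL1: "CL r n (Suc k) = {1\<^sub>m n} \<union> {bprod n i l | i. 1 \<le> i \<and> i \<le> l}"
        using odd l False by (simp add: CL_def)
      have e1: "(k + 2) div 2 = Suc l" "(k+1) div 2 = l" "(Suc k + 2) div 2 = Suc l" "(Suc k + 1) div 2 = Suc l" using l by auto
      obtain q where q: "1 \<le> q" "q \<le> Suc l" "d *\<^sub>v v = vec n (ins q l (\<lambda>i. v $ i))"
         "\<forall>i j. i \<le> j \<and> j < Suc l \<longrightarrow> Re ((d *\<^sub>v v) $ i) \<le> Re ((d *\<^sub>v v) $ j)"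
        using ins_step[OF x0(1,2,4) l1 IH(2), of d] dmin CL1 IH(5) e1 unfolding f_def by auto
      have "\<forall>j < Suc l. maxrot r ((d *\<^sub>v v) $ j)"
      proof (intro allI impI)
        fix j assume j: "j < Suc l"
        obtain j' where j': "j' < Suc l" "ins q l (\<lambda>i. v $ i) j = v $ j'" using ins_range[OF j] by blast
        have "(d *\<^sub>v v) $ j = v $ j'" using q(3) j' j l1 by simp
        thus "maxrot r ((d *\<^sub>v v) $ j)" using IH(4) False j' unfolding e1 by auto
      qed
      thus ?thesis using q(4) unfolding e1 by auto
    qed
  qed
  show ?case unfolding run using A B C D by simp
qed

theorem mainTheorem16:
  fixes n r :: nat and x0 :: "complex vec" and ord :: "nat \<Rightarrow> complex mat list"
  assumes "n \<ge> 1" and "r \<ge> 1"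
    and "x0 \<in> carrier_vec n"
    and "\<forall>i<n. Im (x0 $ i) = 0"
    and "\<forall>i<n. 0 < Re (x0 $ i)"
    and "\<forall>i j. i < j \<and> j < n \<longrightarrow> Re (x0 $ i) < Re (x0 $ j)"
    and "hnorm x0 = 1"
    and "\<forall>k \<in> {1..2*n-1}. distinct (ord k) \<and> set (ord k) = CL r n k"
  shows "\<forall>g \<in> Grn r n. \<forall>x \<in> DR r n x0 g.
           \<exists>s \<in> Stab r n x0. decode n ord x0 x = s * g"
proof (intro ballI)
  fix g x assume g: "g \<in> Grn r n" and xD: "x \<in> DR r n x0 g"
  have r: "r > 0" using assms(2) by simp
  have x: "x \<in> carrier_vec n" using xD unfolding DR_def by auto
  define p where "p = decode n ord x0 x"
  have R: "p \<in> Grn r n" "p *\<^sub>v x \<in> carrier_vec n"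
     "\<forall>j < n. maxrot r ((p *\<^sub>v x) $ j)"
     "\<forall>i j. i \<le> j \<and> j < n \<longrightarrow> Re ((p *\<^sub>v x) $ i) \<le> Re ((p *\<^sub>v x) $ j)"
  proof -
    have H: "fst (dec_run n ord x0 x (2*n-1)) \<in> Grn r n \<and> snd (dec_run n ord x0 x (2*n-1)) \<in> carrier_vec n
     \<and> fst (dec_run n ord x0 x (2*n-1)) *\<^sub>v x = snd (dec_run n ord x0 x (2*n-1))
     \<and> (\<forall>j < (if 2*n-1 = 0 then 0 else (2*n-1+2) div 2). maxrot r (snd (dec_run n ord x0 x (2*n-1)) $ j))
     \<and> (\<forall>i j. i \<le> j \<and> j < (2*n-1+1) div 2 \<longrightarrow> Re (snd (dec_run n ord x0 x (2*n-1)) $ i) \<le> Re (snd (dec_run n ord x0 x (2*n-1)) $ j))"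
      by (rule run_inv[OF r assms(3,4,5,6,8) x]) simp
    have e: "(if 2*n-1 = 0 then 0 else (2*n-1+2) div 2) = n" "(2*n-1+1) div 2 = n" using assms(1) by auto
    show "p \<in> Grn r n" "p *\<^sub>v x \<in> carrier_vec n"
     "\<forall>j < n. maxrot r ((p *\<^sub>v x) $ j)"
     "\<forall>i j. i \<le> j \<and> j < n \<longrightarrow> Re ((p *\<^sub>v x) $ i) \<le> Re ((p *\<^sub>v x) $ j)"
      using H unfolding e p_def decode_def by auto
  qed
  have gx: "g *\<^sub>v x \<in> carrier_vec n" using Grn_carrier[OF g] x by (metis mult_mat_vec_carrier)
  have "Dist x0 n (\<lambda>i. (p *\<^sub>v x) $ i) \<le> Dist x0 n (\<lambda>i. (g *\<^sub>v x) $ i)"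
    by (rule opt_final[OF r assms(4,5,6) x R(1) g R(3,4)])
  hence le: "hnorm (p *\<^sub>v x - x0) \<le> hnorm (g *\<^sub>v x - x0)"
    using hnorm_Dist[OF R(2) assms(3)] hnorm_Dist[OF gx assms(3)] by simp
  have "p \<in> {s * g | s. s \<in> Stab r n x0}"
  proof (rule ccontr)
    assume "p \<notin> {s * g | s. s \<in> Stab r n x0}"
    hence "hnorm (g *\<^sub>v x - x0) < hnorm (p *\<^sub>v x - x0)" using xD R(1) unfolding DR_def by blast
    thus False using le by simp
  qed
  thus "\<exists>s \<in> Stab r n x0. decode n ord x0 x = s * g" unfolding p_def by blast
qed

end
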